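(* Let $X$ be a space and $p\in X$, and let $\{H_n:n\in\omega\}$ be a countable family of subsets of $X$ with $p\in\overline{\bigcup_{n\in\omega}H_n}$. If either (a) $X$ is strongly $L$-selective, or (b) $X$ is $L$-selective and every $H_n$ is closed, then there is a sequence of points of $\bigcup_{n\in\omega}H_n$ converging to $p$.
   Context: All spaces are assumed $T_1$. For spaces $Y$, $X$, a map $\varphi:Y\to\mathcal P(X)\setminus\{\emptyset\}$ is lower semicontinuous (l.s.c.) if $\{y:\varphi(y)\cap U\neq\emptyset\}$ is open in $Y$ for every open $U\subseteq X$; a selection is a map $f:Y\to X$ with $f(y)\in\varphi(y)$ for all $y$. $X$ is strongly $Y$-selective if every l.s.c. map $Y\to\mathcal P(X)\setminus\{\emptyset\}$ has a continuous selection, and $Y$-selective if every l.s.c. map from $Y$ to the nonempty closed subsets of $X$ has a continuous selection. (Strongly) $L$-selective means (strongly) $(\omega+1)$-selective, with $\omega+1$ carrying the order topology. *)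

theory Defs
  imports "HOL-Analysis.Analysis"
begin

definition lsc_map :: "'b topology \<Rightarrow> 'a topology \<Rightarrow> ('b \<Rightarrow> 'a set) \<Rightarrow> bool" where
  "lsc_map Y X \<phi> \<longleftrightarrow>
     (\<forall>y\<in>topspace Y. \<phi> y \<subseteq> topspace X \<and> \<phi> y \<noteq> {}) \<and>
     (\<forall>U. openin X U \<longrightarrow> openin Y {y \<in> topspace Y. \<phi> y \<inter> U \<noteq> {}})"

definition strongly_selective :: "'b topology \<Rightarrow> 'a topology \<Rightarrow> bool" where
  "strongly_selective Y X \<longleftrightarrow>
     (\<forall>\<phi>. lsc_map Y X \<phi> \<longrightarrow>
        (\<exists>f. continuous_map Y X f \<and> (\<forall>y\<in>topspace Y. f y \<in> \<phi> y)))"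

definition selective :: "'b topology \<Rightarrow> 'a topology \<Rightarrow> bool" where
  "selective Y X \<longleftrightarrow>
     (\<forall>\<phi>. lsc_map Y X \<phi> \<and> (\<forall>y\<in>topspace Y. closedin X (\<phi> y)) \<longrightarrow>
        (\<exists>f. continuous_map Y X f \<and> (\<forall>y\<in>topspace Y. f y \<in> \<phi> y)))"

text \<open>\<omega>+1 with the order topology is modelled by enat with its order topology.\<close>
definition strongly_L_selective :: "'a topology \<Rightarrow> bool" where
  "strongly_L_selective X \<longleftrightarrow> strongly_selective (euclidean :: enat topology) X"

definition L_selective :: "'a topology \<Rightarrow> bool" where
  "L_selective X \<longleftrightarrow> selective (euclidean :: enat topology) X"

end

theory Submission
  imports Defs
begin

lemma enat_seq_lim: "limitin (euclidean :: enat topology) (\<lambda>k. enat k) \<infinity> sequentially"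
  unfolding limitin_def
proof (intro conjI allI impI)
  fix U :: "enat set" assume "openin euclidean U \<and> \<infinity> \<in> U"
  then obtain n :: nat where n: "{enat n<..} \<subseteq> U" using open_enat_iff by auto
  show "\<forall>\<^sub>F k in sequentially. enat k \<in> U"
    unfolding eventually_sequentially
    by (rule exI[of _ "Suc n"]) (use n in auto)
qed auto

theorem mainTheorem13:
  fixes X :: "'a topology" and p :: 'a and H :: "nat \<Rightarrow> 'a set"
  assumes "t1_space X"
    and "p \<in> topspace X"
    and "\<forall>n. H n \<subseteq> topspace X"
    and "p \<in> X closure_of (\<Union>n. H n)"
    and "strongly_L_selective X \<or> (L_selective X \<and> (\<forall>n. closedin X (H n)))"
  shows "\<exists>s :: nat \<Rightarrow> 'a. (\<forall>k. s k \<in> (\<Union>n. H n)) \<and> limitin X s p sequentially"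
proof (cases "p \<in> (\<Union>n. H n)")
  case True
  then show ?thesis using assms(2) by (intro exI[of _ "\<lambda>k. p"]) auto
next
  case False
  define A where "A = (\<Union>n. H n)"
  have "A \<noteq> {}" using assms(4) unfolding A_def by (metis closure_of_empty empty_iff)
  then obtain N where N: "H N \<noteq> {}" unfolding A_def by auto
  define \<phi> :: "enat \<Rightarrow> 'a set" where
    "\<phi> y = (case y of enat n \<Rightarrow> (\<Union>m\<in>{..max n N}. H m) | \<infinity> \<Rightarrow> {p})" for y
  have phin: "\<phi> (enat n) = (\<Union>m\<in>{..max n N}. H m)" for n by (simp add: \<phi>_def)
  have phii: "\<phi> \<infinity> = {p}" by (simp add: \<phi>_def)
  have lsc: "lsc_map euclidean X \<phi>"
    unfolding lsc_map_def
  proof (intro conjI allI impI ballI)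
    fix y :: enat
    show "\<phi> y \<subseteq> topspace X" using assms(2,3)
      by (cases y) (auto simp: phin phii)
    show "\<phi> y \<noteq> {}" using N
      by (cases y) (auto simp: phin phii)
  next
    fix U assume U: "openin X U"
    show "openin euclidean {y \<in> topspace euclidean. \<phi> y \<inter> U \<noteq> {}}"
    proof -
    have "\<exists>n::nat. {enat n<..} \<subseteq> {y \<in> topspace euclidean. \<phi> y \<inter> U \<noteq> {}}"
      if "\<infinity> \<in> {y \<in> topspace euclidean. \<phi> y \<inter> U \<noteq> {}}"
    proof -
      note that
      then have "p \<in> U" by (auto simp: phii)
      then have "U \<inter> A \<noteq> {}" using assms(4) U unfolding A_def in_closure_of
        by blast
      then obtain m x where x: "x \<in> U" "x \<in> H m" unfolding A_def by auto
      have "{enat m<..} \<subseteq> {y \<in> topspace euclidean. \<phi> y \<inter> U \<noteq> {}}"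
      proof
        fix y :: enat assume y: "y \<in> {enat m<..}"
        show "y \<in> {y \<in> topspace euclidean. \<phi> y \<inter> U \<noteq> {}}"
        proof (cases y)
          case (enat k)
          then have "m \<le> max k N" using y by auto
          then show ?thesis using x enat by (auto simp: phin)
        next
          case infinity
          then show ?thesis using \<open>p \<in> U\<close> by (auto simp: phii)
        qed
      qed
      then show "\<exists>n::nat. {enat n<..} \<subseteq> {y \<in> topspace euclidean. \<phi> y \<inter> U \<noteq> {}}" by blast
    qed
    then show ?thesis unfolding open_openin[symmetric] open_enat_iff by blast
    qed
  qed
  have clo: "closedin X (\<phi> y)" if "\<forall>n. closedin X (H n)" for y
  proof (cases y)
    case (enat n)
    then show ?thesis using that by (auto simp: phin intro!: closedin_Union)
  next
    case infinity
    then show ?thesis using assms(1,2) by (simp add: phii t1_space_closedin_singleton)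
  qed
  obtain f where f: "continuous_map euclidean X f" "\<And>y. f y \<in> \<phi> y"
  proof -
    have "\<exists>f. continuous_map euclidean X f \<and> (\<forall>y\<in>topspace euclidean. f y \<in> \<phi> y)"
    proof (cases "strongly_L_selective X")
      case True
      then show ?thesis using lsc unfolding strongly_L_selective_def strongly_selective_def by blast
    next
      case False
      then have "L_selective X" "\<forall>n. closedin X (H n)" using assms(5) by auto
      then show ?thesis using lsc clo unfolding L_selective_def selective_def by blast
    qed
    then show ?thesis using that by auto
  qed
  have "limitin X (f \<circ> (\<lambda>k. enat k)) (f \<infinity>) sequentially"
    by (rule continuous_map_limit[OF f(1) enat_seq_lim])
  moreover have "f \<infinity> = p" using f(2)[of \<infinity>] by (simp add: phii)
  moreover have "\<forall>k. (f \<circ> (\<lambda>k. enat k)) k \<in> (\<Union>n. H n)"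
  proof
    fix k
    have "f (enat k) \<in> \<phi> (enat k)" by (rule f(2))
    then show "(f \<circ> (\<lambda>k. enat k)) k \<in> (\<Union>n. H n)" unfolding phin by auto
  qed
  ultimately show ?thesis by (intro exI[of _ "f \<circ> (\<lambda>k. enat k)"]) simp
qed

end
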